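(* Suppose $F$ is symmetric ($F(-i)=1-F(i)$ for all $i$), let $R\in(0,1)$, $\beta=F(1/2-R)$, $Q=(q_1+q_2)/2$ and $\sigma=q_H/q_L$. Then $\pi^B=\frac{(1-2Q)\sigma}{1+\sigma}+2Q\beta$, $\Delta_O^B=\frac{\beta Q(\sigma+1)-2Q\sigma+\sigma}{2\beta Q(\sigma+1)-2Q\sigma+\sigma}-\frac{(1-2Q)\sigma}{1+\sigma}-Q$, and the value of the recommendation system is $V(\beta)=\pi^B\Delta_O^B=(1-2Q)\frac{\sigma+Q\left(\beta-\sigma+\sigma^2(1-\beta)\right)}{(\sigma+1)^2}$.
   Context: Setting. Consumer types are $i\in[-1/2,1/2]$, distributed according to a continuous cumulative distribution function $F$ with full support on $[-1/2,1/2]$. A product has a quality vector $(Q_1,Q_2)\in\{0,1\}^2$; a type-$i$ consumer gets payoff $(1/2+i)Q_1+(1/2-i)Q_2$ from it. The versions $(1,1),(1,0),(0,1),(0,0)$ have prior probabilities $q_H,q_1,q_2,q_L$ respectively, all strictly positive and summing to $1$. Given a threshold $R\in(0,1)$, a sender whose type is drawn from $F$ independently of the product gives a buy recommendation $B$ if her payoff from the product is at least $R$ and a don't-buy recommendation $D$ otherwise. Let $\phi_1(R)=1-F(R-1/2)$, $\phi_2(R)=F(1/2-R)$, $\pi^B=q_H+q_1\phi_1(R)+q_2\phi_2(R)$, $\pi^D=1-\pi^B$. Posteriors: $p^B_H=q_H/\pi^B$, $p^B_1=q_1\phi_1(R)/\pi^B$, $p^B_2=q_2\phi_2(R)/\pi^B$;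 $p^D_H=0$, $p^D_1=q_1(1-\phi_1(R))/\pi^D$, $p^D_2=q_2(1-\phi_2(R))/\pi^D$. Let $U_i^r=p_H^r+(1/2+i)p_1^r+(1/2-i)p_2^r$ for $r\in\{B,D\}$ and $U_i^0=q_H+(1/2+i)q_1+(1/2-i)q_2$. The objective effect of the buy recommendation is $\Delta_O^B=p_H^B-q_H+\frac{p_1^B-q_1}{2}+\frac{p_2^B-q_2}{2}$. The value of the recommendation system is $V=\pi^B\int_{-1/2}^{1/2}\max\{U_i^B-U_i^0,0\}\,dF(i)+\pi^D\int_{-1/2}^{1/2}\max\{U_i^D-U_i^0,0\}\,dF(i)$. *)

theory Defs
  imports "HOL-Analysis.Analysis"
begin

definition type_cdf :: "(real \<Rightarrow> real) \<Rightarrow> bool" where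
  "type_cdf F \<longleftrightarrow> mono F \<and> continuous_on UNIV F
     \<and> (\<forall>x. x \<le> -1/2 \<longrightarrow> F x = 0) \<and> (\<forall>x. x \<ge> 1/2 \<longrightarrow> F x = 1)
     \<and> strict_mono_on {-1/2..1/2} F"

definition phi1 :: "(real \<Rightarrow> real) \<Rightarrow> real \<Rightarrow> real" where
  "phi1 F R = 1 - F (R - 1/2)"
definition phi2 :: "(real \<Rightarrow> real) \<Rightarrow> real \<Rightarrow> real" where
  "phi2 F R = F (1/2 - R)"

definition piB :: "(real \<Rightarrow> real) \<Rightarrow> real \<Rightarrow> real \<Rightarrow> real \<Rightarrow> real \<Rightarrow> real" where
  "piB F qH q1 q2 R = qH + q1 * phi1 F R + q2 * phi2 F R"
definition piD :: "(real \<Rightarrow> real) \<Rightarrow> real \<Rightarrow> real \<Rightarrow> real \<Rightarrow> real \<Rightarrow> real" where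
  "piD F qH q1 q2 R = 1 - piB F qH q1 q2 R"

definition pBH where "pBH F qH q1 q2 R = qH / piB F qH q1 q2 R"
definition pB1 where "pB1 F qH q1 q2 R = q1 * phi1 F R / piB F qH q1 q2 R"
definition pB2 where "pB2 F qH q1 q2 R = q2 * phi2 F R / piB F qH q1 q2 R"
definition pDH :: real where "pDH = 0"
definition pD1 where "pD1 F qH q1 q2 R = q1 * (1 - phi1 F R) / piD F qH q1 q2 R"
definition pD2 where "pD2 F qH q1 q2 R = q2 * (1 - phi2 F R) / piD F qH q1 q2 R"

definition UB :: "(real \<Rightarrow> real) \<Rightarrow> real \<Rightarrow> real \<Rightarrow> real \<Rightarrow> real \<Rightarrow> real \<Rightarrow> real" where
  "UB F qH q1 q2 R i = pBH F qH q1 q2 R + (1/2 + i) * pB1 F qH q1 q2 R + (1/2 - i) * pB2 F qH q1 q2 R"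
definition UD :: "(real \<Rightarrow> real) \<Rightarrow> real \<Rightarrow> real \<Rightarrow> real \<Rightarrow> real \<Rightarrow> real \<Rightarrow> real" where
  "UD F qH q1 q2 R i = pDH + (1/2 + i) * pD1 F qH q1 q2 R + (1/2 - i) * pD2 F qH q1 q2 R"
definition U0 :: "real \<Rightarrow> real \<Rightarrow> real \<Rightarrow> real \<Rightarrow> real" where
  "U0 qH q1 q2 i = qH + (1/2 + i) * q1 + (1/2 - i) * q2"

definition DeltaOB :: "(real \<Rightarrow> real) \<Rightarrow> real \<Rightarrow> real \<Rightarrow> real \<Rightarrow> real \<Rightarrow> real" where
  "DeltaOB F qH q1 q2 R = pBH F qH q1 q2 R - qH + (pB1 F qH q1 q2 R - q1) / 2
                          + (pB2 F qH q1 q2 R - q2) / 2"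

text \<open>Value of the recommendation system; integration against dF is the
  Lebesgue-Stieltjes integral w.r.t. the measure induced by F.\<close>
definition Vsys :: "(real \<Rightarrow> real) \<Rightarrow> real \<Rightarrow> real \<Rightarrow> real \<Rightarrow> real \<Rightarrow> real" where
  "Vsys F qH q1 q2 R =
     piB F qH q1 q2 R * (LINT i:{-1/2..1/2}|interval_measure F. max (UB F qH q1 q2 R i - U0 qH q1 q2 i) 0)
   + piD F qH q1 q2 R * (LINT i:{-1/2..1/2}|interval_measure F. max (UD F qH q1 q2 R i - U0 qH q1 q2 i) 0)"

end

theory Submission
  imports Defs "HOL-Probability.Probability"
begin

lemma F_props:
  assumes cdf: "type_cdf F"
  shows "\<And>x y. x \<le> y \<Longrightarrow> F x \<le> F y" "\<And>a. continuous (at_right a) F"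
    "(F \<longlongrightarrow> 0) at_bot" "(F \<longlongrightarrow> 1) at_top" "\<And>x. isCont F x"
    "\<And>x. 0 \<le> F x" "\<And>x. F x \<le> 1"
proof -
  have mono: "mono F" and co: "continuous_on UNIV F" and lo: "\<forall>x. x \<le> -1/2 \<longrightarrow> F x = 0"
    and hi: "\<forall>x. x \<ge> 1/2 \<longrightarrow> F x = 1" using cdf unfolding type_cdf_def by auto
  show "\<And>x y. x \<le> y \<Longrightarrow> F x \<le> F y" using mono by (simp add: monoD)
  show ic: "\<And>x. isCont F x" using co by (simp add: continuous_on_eq_continuous_at)
  show "\<And>a. continuous (at_right a) F" using ic by (simp add: continuous_at_imp_continuous_at_within)
  show "(F \<longlongrightarrow> 0) at_bot"
    by (rule tendsto_eventually) (use lo in \<open>auto simp: eventually_at_bot_linorder intro!: exI[of _ "-1/2"]\<close>)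
  show "(F \<longlongrightarrow> 1) at_top"
    by (rule tendsto_eventually) (use hi in \<open>auto simp: eventually_at_top_linorder intro!: exI[of _ "1/2"]\<close>)
  show "\<And>x. 0 \<le> F x"
  proof -
    fix x show "0 \<le> F x"
    proof (cases "x \<le> -1/2")
      case True then show ?thesis using lo by simp
    next
      case False then have "F (-1/2) \<le> F x" using mono by (simp add: monoD)
      then show ?thesis using lo by simp
    qed
  qed
  show "\<And>x. F x \<le> 1"
  proof -
    fix x show "F x \<le> 1"
    proof (cases "x \<ge> 1/2")
      case True then show ?thesis using hi by simp
    next
      case False then have "F x \<le> F (1/2)" using mono by (simp add: monoD)
      then show ?thesis using hi by simp
    qed
  qed
qed

lemma odd_integral_zero:
  assumes cdf: "type_cdf F" and sym: "\<forall>i. F (- i) = 1 - F i"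
  shows "(LINT i:{-1/2..1/2}|interval_measure F. i) = 0"
    and "measure (interval_measure F) {-1/2..1/2} = 1"
    and "real_distribution (interval_measure F)"
proof -
  note P = F_props[OF cdf]
  define M where "M = interval_measure F"
  have rd: "real_distribution M" unfolding M_def
    by (rule real_distribution_interval_measure) (use P in auto)
  then show "real_distribution (interval_measure F)" by (simp add: M_def)
  interpret real_distribution M by (rule rd)
  have cdfM: "cdf M = F" unfolding M_def by (rule cdf_interval_measure) (use P in auto)
  have pt: "measure M {x} = 0" for x using isCont_cdf[of x] P(5) cdfM by simp
  have lt: "measure M {..<x} = F x" for x
  proof -
    have "{..x} = {..<x} \<union> {x}" by auto
    then have "measure M {..x} = measure M {..<x} + measure M {x}"
      using finite_measure_Union[of "{..<x}" "{x}"] by auto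
    moreover have "F x = measure M {..x}" using cdfM cdf_def2 by metis
    ultimately show ?thesis using pt[of x] by linarith
  qed
  define N where "N = distr M borel uminus"
  have rdN: "real_distribution N" unfolding N_def by (rule real_distribution_distr) simp
  have "cdf N = cdf M"
  proof
    fix x
    have "cdf N x = measure M (uminus -` {..x} \<inter> space M)"
      unfolding cdf_def N_def by (subst measure_distr) auto
    also have "uminus -` {..x} \<inter> space M = space M - {..< -x}" by auto
    also have "measure M (space M - {..< -x}) = 1 - measure M {..< -x}"
      by (subst prob_compl) auto
    also have "\<dots> = F x" using lt sym by simp
    finally show "cdf N x = cdf M x" using cdfM by simp
  qed
  then have NM: "N = M" using cdf_unique[OF rdN rd] by simp
  define g where "g i = indicator {-1/2..1/2::real} i * (i::real)" for i
  have gm: "g \<in> borel_measurable borel" unfolding g_def by measurable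
  have godd: "g (- i) = - g i" for i unfolding g_def by (auto simp: indicator_def)
  have "integral\<^sup>L M g = integral\<^sup>L N g" using NM by simp
  also have "\<dots> = integral\<^sup>L M (\<lambda>i. g (- i))" unfolding N_def
    by (rule integral_distr) (use gm in auto)
  also have "\<dots> = - integral\<^sup>L M g" by (simp add: godd)
  finally have "integral\<^sup>L M g = 0" by simp
  moreover have gfun: "(\<lambda>i. indicator {-1/2..1/2::real} i *\<^sub>R (i::real)) = g"
    by (simp add: g_def fun_eq_iff)
  ultimately show "(LINT i:{-1/2..1/2}|interval_measure F. i) = 0"
    unfolding set_lebesgue_integral_def M_def[symmetric] gfun by simp
  have seq: "{-1/2..1/2::real} = {..1/2} - {..< -1/2}" by auto
  have "measure M {-1/2..1/2::real} = measure M ({..1/2} - {..< -1/2})" by (simp only: seq)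
  also have "\<dots> = measure M {..1/2} - measure M {..< -1/2}"
    by (rule finite_measure_Diff) auto
  also have "measure M {..1/2} = F (1/2)" using cdfM cdf_def2 by metis
  also have "measure M {..< -1/2} = F (-1/2)" by (rule lt)
  also have "F (1/2) - F (-1/2) = 1" using cdf unfolding type_cdf_def by simp
  finally show "measure (interval_measure F) {-1/2..1/2} = 1" by (simp add: M_def)
qed


lemma lin_integral:
  assumes cdf: "type_cdf F" and sym: "\<forall>i. F (- i) = 1 - F i"
  shows "(LINT i:{-1/2..1/2}|interval_measure F. a + b * i) = a"
proof -
  note O = odd_integral_zero[OF cdf sym]
  interpret real_distribution "interval_measure F" by (rule O(3))
  have i1: "set_integrable (interval_measure F) {-1/2..1/2} (\<lambda>i. i)"
    unfolding set_integrable_def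
    by (rule integrable_const_bound[where B=1]) (auto simp: indicator_def)
  have i2: "set_integrable (interval_measure F) {-1/2..1/2} (\<lambda>i. a)"
    unfolding set_integrable_def
    by (rule integrable_const_bound[where B="\<bar>a\<bar>"]) (auto simp: indicator_def)
  have i3: "set_integrable (interval_measure F) {-1/2..1/2} (\<lambda>i. b * i)"
    using i1 by simp
  have "(LINT i:{-1/2..1/2}|interval_measure F. a + b * i)
      = (LINT i:{-1/2..1/2}|interval_measure F. a) + (LINT i:{-1/2..1/2}|interval_measure F. b * i)"
    by (rule set_integral_add(2)[OF i2 i3])
  also have "(LINT i:{-1/2..1/2}|interval_measure F. a) = measure (interval_measure F) {-1/2..1/2} *\<^sub>R a"
    by (rule set_integral_const) auto
  finally show ?thesis using O(1,2) by simp
qed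

theorem lemma1:
  fixes F :: "real \<Rightarrow> real" and qH q1 q2 qL R \<beta> Q \<sigma> :: real
  assumes cdf: "type_cdf F"
    and sym: "\<forall>i. F (- i) = 1 - F i"
    and pos: "qH > 0" "q1 > 0" "q2 > 0" "qL > 0"
    and sum1: "qH + q1 + q2 + qL = 1"
    and R: "0 < R" "R < 1"
    and \<beta>_def: "\<beta> = F (1/2 - R)"
    and Q_def: "Q = (q1 + q2) / 2"
    and \<sigma>_def: "\<sigma> = qH / qL"
  shows "piB F qH q1 q2 R = (1 - 2*Q) * \<sigma> / (1 + \<sigma>) + 2 * Q * \<beta>
    \<and> DeltaOB F qH q1 q2 R =
           (\<beta> * Q * (\<sigma> + 1) - 2 * Q * \<sigma> + \<sigma>) / (2 * \<beta> * Q * (\<sigma> + 1) - 2 * Q * \<sigma> + \<sigma>)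
           - (1 - 2*Q) * \<sigma> / (1 + \<sigma>) - Q
    \<and> Vsys F qH q1 q2 R = piB F qH q1 q2 R * DeltaOB F qH q1 q2 R
    \<and> piB F qH q1 q2 R * DeltaOB F qH q1 q2 R =
           (1 - 2*Q) * (\<sigma> + Q * (\<beta> - \<sigma> + \<sigma>^2 * (1 - \<beta>))) / (\<sigma> + 1)^2"
proof -
  note P = F_props[OF cdf]
  have b0: "0 \<le> \<beta>" and b1: "\<beta> \<le> 1" using P(6,7) \<beta>_def by auto
  have ph1: "phi1 F R = \<beta>" unfolding phi1_def \<beta>_def using sym[rule_format, of "R - 1/2"] by simp
  have ph2: "phi2 F R = \<beta>" unfolding phi2_def \<beta>_def by simp
  define p where "p = qH + (q1 + q2) * \<beta>"
  have pB: "piB F qH q1 q2 R = p" unfolding piB_def ph1 ph2 p_def by (simp add: algebra_simps)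
  have pD: "piD F qH q1 q2 R = 1 - p" unfolding piD_def pB ..
  have qLe: "qL = 1 - qH - q1 - q2" using sum1 by simp
  have ppos: "p > 0" unfolding p_def using pos b0 by (simp add: add_pos_nonneg)
  have dpos: "1 - p > 0"
  proof -
    have "1 - p = qL + (q1 + q2) * (1 - \<beta>)" unfolding p_def qLe by (simp add: algebra_simps)
    moreover have "(q1 + q2) * (1 - \<beta>) \<ge> 0" using pos b1 by simp
    ultimately show ?thesis using pos by linarith
  qed
  have e1: "pBH F qH q1 q2 R = qH / p" unfolding pBH_def pB ..
  have e2: "pB1 F qH q1 q2 R = q1 * \<beta> / p" unfolding pB1_def pB ph1 ..
  have e3: "pB2 F qH q1 q2 R = q2 * \<beta> / p" unfolding pB2_def pB ph2 ..
  have e4: "pD1 F qH q1 q2 R = q1 * (1 - \<beta>) / (1 - p)" unfolding pD1_def pD ph1 ..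
  have e5: "pD2 F qH q1 q2 R = q2 * (1 - \<beta>) / (1 - p)" unfolding pD2_def pD ph2 ..
  have DO: "DeltaOB F qH q1 q2 R = (qH + Q * \<beta>) / p - qH - Q"
    unfolding DeltaOB_def e1 e2 e3 Q_def using ppos by (simp add: field_simps)
  have p': "p = qH + 2 * Q * \<beta>" unfolding p_def Q_def by simp
  have qLQ: "1 - 2 * Q = qH + qL" unfolding Q_def qLe by (simp add: field_simps)
  have s1: "(1 - 2*Q) * \<sigma> / (1 + \<sigma>) = qH"
  proof -
    have a: "1 + \<sigma> = (qH+qL)/qL" unfolding \<sigma>_def using pos by (simp add: field_simps)
    have "qH + qL > 0" using pos by simp
    then show ?thesis unfolding qLQ a unfolding \<sigma>_def using pos by simp
  qed
  have s1': "1 + \<sigma> > 0"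
  proof -
    have "qH / qL > 0" using pos by simp
    then show ?thesis unfolding \<sigma>_def by linarith
  qed
  have c1: "piB F qH q1 q2 R = (1 - 2*Q) * \<sigma> / (1 + \<sigma>) + 2 * Q * \<beta>"
    unfolding pB s1 by (simp add: p_def Q_def)
  have c2: "DeltaOB F qH q1 q2 R =
           (\<beta> * Q * (\<sigma> + 1) - 2 * Q * \<sigma> + \<sigma>) / (2 * \<beta> * Q * (\<sigma> + 1) - 2 * Q * \<sigma> + \<sigma>)
           - (1 - 2*Q) * \<sigma> / (1 + \<sigma>) - Q"
  proof -
    have qHs: "qH * (1 + \<sigma>) = (1 - 2*Q) * \<sigma>" using s1 s1' by (simp add: field_simps)
    have n: "\<beta> * Q * (\<sigma> + 1) - 2 * Q * \<sigma> + \<sigma> = (qH + Q * \<beta>) * (1 + \<sigma>)"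
      using qHs by (simp add: algebra_simps)
    have d: "2 * \<beta> * Q * (\<sigma> + 1) - 2 * Q * \<sigma> + \<sigma> = p * (1 + \<sigma>)"
      using qHs unfolding p' by (simp add: algebra_simps)
    show ?thesis unfolding DO n d s1 using s1' by simp
  qed
  have c4: "piB F qH q1 q2 R * DeltaOB F qH q1 q2 R =
           (1 - 2*Q) * (\<sigma> + Q * (\<beta> - \<sigma> + \<sigma>^2 * (1 - \<beta>))) / (\<sigma> + 1)^2"
  proof -
    have lhs: "piB F qH q1 q2 R * DeltaOB F qH q1 q2 R = qH + Q * \<beta> - p * (qH + Q)"
      unfolding pB DO using ppos by (simp add: field_simps)
    have qH': "qH = \<sigma> * qL" unfolding \<sigma>_def using pos by simp
    have Q2: "2 * Q = 1 - (1 + \<sigma>) * qL" using qLQ qH' by (simp add: algebra_simps)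
    have key: "(qH + Q * \<beta> - p * (qH + Q)) * (\<sigma> + 1) = qL * (\<sigma> + Q * (\<beta> - \<sigma> + \<sigma>^2 * (1 - \<beta>)))"
      using Q2 unfolding p' qH' by algebra
    have l2: "1 - 2 * Q = (1 + \<sigma>) * qL" using qLQ qH' by (simp add: algebra_simps)
    have k2: "qH + Q * \<beta> - p * (qH + Q) = qL * (\<sigma> + Q * (\<beta> - \<sigma> + \<sigma>^2 * (1 - \<beta>))) / (\<sigma> + 1)"
      using key s1' by (simp add: field_simps)
    have hl: "(1 + \<sigma>) * y / ((\<sigma> + 1)^2) = y / (\<sigma> + 1)" for y
      using s1' by (simp add: power2_eq_square add.commute)
    show ?thesis unfolding lhs l2 k2 mult.assoc[of "1 + \<sigma>" qL] hl ..
  qed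
  have c3: "Vsys F qH q1 q2 R = piB F qH q1 q2 R * DeltaOB F qH q1 q2 R"
  proof -
    define A where "A = DeltaOB F qH q1 q2 R"
    define Bc where "Bc = (pB1 F qH q1 q2 R - q1) - (pB2 F qH q1 q2 R - q2)"
    define X where "X = qH / p - qH + q1 * \<beta> / p - q1"
    define Y where "Y = qH / p - qH + q2 * \<beta> / p - q2"
    have X0: "X \<ge> 0"
    proof -
      have m1: "X * p = qH + q1 * \<beta> - p * (qH + q1)"
        unfolding X_def using ppos by (simp add: field_simps)
      have m2: "qH + q1 * \<beta> - p * (qH + q1) = qH * qL + qH * q2 * (1 - \<beta>) + q1 * \<beta> * qL"
        unfolding p_def qLe by algebra
      have nn: "qH * qL + qH * q2 * (1 - \<beta>) + q1 * \<beta> * qL \<ge> 0"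
        by (intro add_nonneg_nonneg mult_nonneg_nonneg) (use pos b0 b1 in auto)
      have "X * p \<ge> 0" using m1 m2 nn by simp
      then show ?thesis using ppos by (simp add: zero_le_mult_iff)
    qed
    have Y0: "Y \<ge> 0"
    proof -
      have m1: "Y * p = qH + q2 * \<beta> - p * (qH + q2)"
        unfolding Y_def using ppos by (simp add: field_simps)
      have m2: "qH + q2 * \<beta> - p * (qH + q2) = qH * qL + qH * q1 * (1 - \<beta>) + q2 * \<beta> * qL"
        unfolding p_def qLe by algebra
      have nn: "qH * qL + qH * q1 * (1 - \<beta>) + q2 * \<beta> * qL \<ge> 0"
        by (intro add_nonneg_nonneg mult_nonneg_nonneg) (use pos b0 b1 in auto)
      have "Y * p \<ge> 0" using m1 m2 nn by simp
      then show ?thesis using ppos by (simp add: zero_le_mult_iff)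
    qed
    define Xd where "Xd = q1 * (1 - \<beta>) / (1 - p) - q1 - qH"
    define Yd where "Yd = q2 * (1 - \<beta>) / (1 - p) - q2 - qH"
    have Xd0: "Xd \<le> 0"
    proof -
      have m1: "Xd * (1 - p) = q1 * (1 - \<beta>) - (1 - p) * (q1 + qH)"
        unfolding Xd_def using dpos by (simp add: field_simps)
      have m2: "q1 * (1 - \<beta>) - (1 - p) * (q1 + qH) = - (qH * qL + qH * q2 * (1 - \<beta>) + q1 * \<beta> * qL)"
        unfolding p_def qLe by algebra
      have nn: "qH * qL + qH * q2 * (1 - \<beta>) + q1 * \<beta> * qL \<ge> 0"
        by (intro add_nonneg_nonneg mult_nonneg_nonneg) (use pos b0 b1 in auto)
      have "Xd * (1 - p) \<le> 0" using m1 m2 nn by simp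
      then show ?thesis using dpos by (simp add: mult_le_0_iff)
    qed
    have Yd0: "Yd \<le> 0"
    proof -
      have m1: "Yd * (1 - p) = q2 * (1 - \<beta>) - (1 - p) * (q2 + qH)"
        unfolding Yd_def using dpos by (simp add: field_simps)
      have m2: "q2 * (1 - \<beta>) - (1 - p) * (q2 + qH) = - (qH * qL + qH * q1 * (1 - \<beta>) + q2 * \<beta> * qL)"
        unfolding p_def qLe by algebra
      have nn: "qH * qL + qH * q1 * (1 - \<beta>) + q2 * \<beta> * qL \<ge> 0"
        by (intro add_nonneg_nonneg mult_nonneg_nonneg) (use pos b0 b1 in auto)
      have "Yd * (1 - p) \<le> 0" using m1 m2 nn by simp
      then show ?thesis using dpos by (simp add: mult_le_0_iff)
    qed
    have IB: "(LINT i:{-1/2..1/2}|interval_measure F. max (UB F qH q1 q2 R i - U0 qH q1 q2 i) 0) = A"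
    proof -
      have "\<forall>i. i \<in> {-1/2..1/2::real} \<longrightarrow> max (UB F qH q1 q2 R i - U0 qH q1 q2 i) 0 = A + Bc * i"
      proof (intro allI impI)
        fix i :: real assume i: "i \<in> {-1/2..1/2}"
        have eq1: "UB F qH q1 q2 R i - U0 qH q1 q2 i = (1/2 + i) * X + (1/2 - i) * Y"
          unfolding UB_def U0_def X_def Y_def e1[symmetric] e2[symmetric] e3[symmetric] by (simp add: field_simps)
        have eq2: "UB F qH q1 q2 R i - U0 qH q1 q2 i = A + Bc * i"
          unfolding UB_def U0_def A_def Bc_def DeltaOB_def by (simp add: field_simps)
        have "(1/2 + i) * X \<ge> 0" "(1/2 - i) * Y \<ge> 0" using i X0 Y0 by auto
        then show "max (UB F qH q1 q2 R i - U0 qH q1 q2 i) 0 = A + Bc * i"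
          using eq1 eq2 by simp
      qed
      then have "(LINT i:{-1/2..1/2}|interval_measure F. max (UB F qH q1 q2 R i - U0 qH q1 q2 i) 0)
          = (LINT i:{-1/2..1/2}|interval_measure F. A + Bc * i)"
        by (intro set_lebesgue_integral_cong) (auto simp: sets_interval_measure)
      also have "\<dots> = A" by (rule lin_integral[OF cdf sym])
      finally show ?thesis .
    qed
    have ID: "(LINT i:{-1/2..1/2}|interval_measure F. max (UD F qH q1 q2 R i - U0 qH q1 q2 i) 0) = 0"
    proof -
      have "\<forall>i. i \<in> {-1/2..1/2::real} \<longrightarrow> max (UD F qH q1 q2 R i - U0 qH q1 q2 i) 0 = 0 + 0 * i"
      proof (intro allI impI)
        fix i :: real assume i: "i \<in> {-1/2..1/2}"
        have eq1: "UD F qH q1 q2 R i - U0 qH q1 q2 i = (1/2 + i) * Xd + (1/2 - i) * Yd"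
          unfolding UD_def U0_def Xd_def Yd_def e4[symmetric] e5[symmetric] pDH_def by (simp add: field_simps)
        have "(1/2 + i) * Xd \<le> 0" "(1/2 - i) * Yd \<le> 0" using i Xd0 Yd0
          by (auto intro: mult_nonneg_nonpos)
        then show "max (UD F qH q1 q2 R i - U0 qH q1 q2 i) 0 = 0 + 0 * i"
          using eq1 by simp
      qed
      then have "(LINT i:{-1/2..1/2}|interval_measure F. max (UD F qH q1 q2 R i - U0 qH q1 q2 i) 0)
          = (LINT i:{-1/2..1/2}|interval_measure F. 0 + 0 * i)"
        by (intro set_lebesgue_integral_cong) (auto simp: sets_interval_measure)
      also have "\<dots> = 0" by (rule lin_integral[OF cdf sym])
      finally show ?thesis .
    qed
    show ?thesis unfolding Vsys_def IB ID A_def by simp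
  qed
  show ?thesis using c1 c2 c3 c4 by blast
qed

end
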